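(* Let $w\in\mathbb{Q}^{V_+}_{\ge0}$, $b\in\mathbb{Z}^{V_+}_{\ge0}$, $\xi\in[N]$, and let $S=\{v_1,\dots,v_\ell\}\subseteq V_+$ be nonempty with $w_{v_1}\le\dots\le w_{v_\ell}$. Let $k'\in\mathbb{Z}_{>0}$ satisfy $k_\xi(S)-k'\le b(S)$, and let $j\in[\ell]$ be the smallest index with $k_\xi(S)-k'\le\sum_{i\in[j]}b_{v_i}$. Set $\bar\alpha_S=\mathbb{I}(k_\xi(S)>k')\,w_{v_j}$ and $\bar\beta_v=\mathbb{I}(v\in\{v_1,\dots,v_{j-1}\})(w_v-w_{v_j})$ for all $v\in V_+$. Then $(\bar\alpha_S,\bar\beta)$ is an optimal solution of the dual linear program $$\max\Big\{\alpha_S(k_\xi(S)-k')+\sum_{v\in V_+}\beta_vb_v:\ \alpha_S+\beta_v\le w_v\ (v\in S),\ \beta_v\le w_v\ (v\in V_+\setminus S),\ \alpha_S\ge0,\ \beta\le0\Big\}$$ of $\mathcal{L}^*_\xi(S,k')=\min\{\sum_{v\in V_+}w_vy_v:\ y(S)\ge k_\xi(S)-k',\ y_v\le b_v\ \forall v\in V_+,\ y\ge0\}$, and $\bar\alpha_S\le\mathcal{L}^*_\xi(S,k')$.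
   Context: $V_+$ is a finite set of customers; $C>0$ is the capacity; $d^\xi\in\mathbb{Q}^{V_+}_{\ge0}$ is the demand vector of scenario $\xi$; $f(S)=\sum_{i\in S}f(i)$; $k_\xi(S)=\lceil d^\xi(S)/C\rceil$; $[j]=\{1,\dots,j\}$ (empty if $j\le 0$); $\mathbb{I}$ is the indicator function. *)

theory Defs
  imports Main "HOL.Real"
begin

definition kxi :: "rat \<Rightarrow> (nat \<Rightarrow> 'a \<Rightarrow> rat) \<Rightarrow> nat \<Rightarrow> 'a set \<Rightarrow> int" where
  "kxi C d xi S = \<lceil>(\<Sum>i\<in>S. d xi i) / C\<rceil>"

definition primal_feasible ::
  "'a set \<Rightarrow> int \<Rightarrow> ('a \<Rightarrow> int) \<Rightarrow> 'a set \<Rightarrow> ('a \<Rightarrow> real) \<Rightarrow> bool" where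
  "primal_feasible V rhs b S y \<longleftrightarrow>
     (\<Sum>v\<in>S. y v) \<ge> real_of_int rhs \<and>
     (\<forall>v\<in>V. y v \<le> real_of_int (b v) \<and> 0 \<le> y v)"

definition primal_value ::
  "'a set \<Rightarrow> ('a \<Rightarrow> rat) \<Rightarrow> int \<Rightarrow> ('a \<Rightarrow> int) \<Rightarrow> 'a set \<Rightarrow> real" where
  "primal_value V w rhs b S =
     Inf {(\<Sum>v\<in>V. real_of_rat (w v) * y v) | y. primal_feasible V rhs b S y}"

definition dual_feasible ::
  "'a set \<Rightarrow> ('a \<Rightarrow> rat) \<Rightarrow> 'a set \<Rightarrow> real \<Rightarrow> ('a \<Rightarrow> real) \<Rightarrow> bool" where
  "dual_feasible V w S \<alpha> \<beta> \<longleftrightarrow>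
     (\<forall>v\<in>S. \<alpha> + \<beta> v \<le> real_of_rat (w v)) \<and>
     (\<forall>v\<in>V - S. \<beta> v \<le> real_of_rat (w v)) \<and>
     0 \<le> \<alpha> \<and> (\<forall>v\<in>V. \<beta> v \<le> 0)"

definition dual_obj ::
  "'a set \<Rightarrow> int \<Rightarrow> ('a \<Rightarrow> int) \<Rightarrow> real \<Rightarrow> ('a \<Rightarrow> real) \<Rightarrow> real" where
  "dual_obj V rhs b \<alpha> \<beta> = \<alpha> * real_of_int rhs + (\<Sum>v\<in>V. \<beta> v * real_of_int (b v))"

definition dual_optimal ::
  "'a set \<Rightarrow> ('a \<Rightarrow> rat) \<Rightarrow> int \<Rightarrow> ('a \<Rightarrow> int) \<Rightarrow> 'a set \<Rightarrow> real \<Rightarrow> ('a \<Rightarrow> real) \<Rightarrow> bool" where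
  "dual_optimal V w rhs b S \<alpha> \<beta> \<longleftrightarrow>
     dual_feasible V w S \<alpha> \<beta> \<and>
     (\<forall>\<alpha>' \<beta>'. dual_feasible V w S \<alpha>' \<beta>' \<longrightarrow>
        dual_obj V rhs b \<alpha>' \<beta>' \<le> dual_obj V rhs b \<alpha> \<beta>)"

end

theory Submission
  imports Defs
begin

lemma weak:
  assumes "finite V" "S \<subseteq> V" "dual_feasible V w S a \<beta>" "primal_feasible V r b S y"
  shows "dual_obj V r b a \<beta> \<le> (\<Sum>v\<in>V. real_of_rat (w v) * y v)"
proof -
  have fS: "finite S" using assms(1,2) finite_subset by blast
  have d: "\<forall>v\<in>S. a + \<beta> v \<le> real_of_rat (w v)" "\<forall>v\<in>V - S. \<beta> v \<le> real_of_rat (w v)"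
     "0 \<le> a" "\<forall>v\<in>V. \<beta> v \<le> 0" using assms(3) unfolding dual_feasible_def by auto
  have p: "(\<Sum>v\<in>S. y v) \<ge> real_of_int r" "\<forall>v\<in>V. y v \<le> real_of_int (b v) \<and> 0 \<le> y v"
    using assms(4) unfolding primal_feasible_def by auto
  have "(\<Sum>v\<in>V. \<beta> v * real_of_int (b v)) \<le> (\<Sum>v\<in>V. \<beta> v * y v)"
    by (rule sum_mono) (use d p in \<open>auto intro: mult_left_mono_neg\<close>)
  moreover have "a * real_of_int r \<le> (\<Sum>v\<in>S. a * y v)"
    using p(1) d(3) by (simp add: sum_distrib_left[symmetric] mult_left_mono)
  moreover have "(\<Sum>v\<in>V. \<beta> v * y v) = (\<Sum>v\<in>V-S. \<beta> v * y v) + (\<Sum>v\<in>S. \<beta> v * y v)"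
    using sum.subset_diff[OF assms(2,1)] .
  moreover have "(\<Sum>v\<in>V. real_of_rat (w v) * y v) = (\<Sum>v\<in>V-S. real_of_rat (w v) * y v) + (\<Sum>v\<in>S. real_of_rat (w v) * y v)"
    using sum.subset_diff[OF assms(2,1)] .
  moreover have "(\<Sum>v\<in>V-S. \<beta> v * y v) \<le> (\<Sum>v\<in>V-S. real_of_rat (w v) * y v)"
    by (rule sum_mono) (use d p in \<open>auto intro: mult_right_mono\<close>)
  moreover have "(\<Sum>v\<in>S. a * y v) + (\<Sum>v\<in>S. \<beta> v * y v) \<le> (\<Sum>v\<in>S. real_of_rat (w v) * y v)"
    unfolding sum.distrib[symmetric]
    by (rule sum_mono) (use d p assms(2) in \<open>auto simp: distrib_right[symmetric] intro!: mult_right_mono\<close>)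
  ultimately show ?thesis unfolding dual_obj_def by linarith
qed
theorem lemma6:
  fixes V S :: "'a set" and C :: rat and d :: "nat \<Rightarrow> 'a \<Rightarrow> rat" and N \<xi> :: nat
    and w :: "'a \<Rightarrow> rat" and b :: "'a \<Rightarrow> int" and vs :: "nat \<Rightarrow> 'a"
    and l j :: nat and k' :: int
  assumes finV: "finite V" and Cpos: "C > 0"
    and dnn: "\<forall>x\<in>{1..N}. \<forall>v\<in>V. d x v \<ge> 0"
    and wnn: "\<forall>v\<in>V. w v \<ge> 0" and bnn: "\<forall>v\<in>V. b v \<ge> 0"
    and xi: "\<xi> \<in> {1..N}"
    and SV: "S \<subseteq> V" and Sne: "S \<noteq> {}"
    and enum: "bij_betw vs {1..l} S"
    and sorted: "\<forall>i\<in>{1..l}. \<forall>i'\<in>{1..l}. i \<le> i' \<longrightarrow> w (vs i) \<le> w (vs i')"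
    and k'pos: "k' > 0"
    and cap: "kxi C d \<xi> S - k' \<le> (\<Sum>v\<in>S. b v)"
    and j: "j \<in> {1..l}" "kxi C d \<xi> S - k' \<le> (\<Sum>i\<in>{1..j}. b (vs i))"
    and jmin: "\<forall>i\<in>{1..l}. kxi C d \<xi> S - k' \<le> (\<Sum>i'\<in>{1..i}. b (vs i')) \<longrightarrow> j \<le> i"
  shows "dual_optimal V w (kxi C d \<xi> S - k') b S
            (if kxi C d \<xi> S > k' then real_of_rat (w (vs j)) else 0)
            (\<lambda>v. if v \<in> vs ` {1..j-1} then real_of_rat (w v - w (vs j)) else 0)
       \<and> (if kxi C d \<xi> S > k' then real_of_rat (w (vs j)) else 0)
            \<le> primal_value V w (kxi C d \<xi> S - k') b S"
proof -
  define r where "r = kxi C d \<xi> S - k'"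
  define al where "al = (if kxi C d \<xi> S > k' then real_of_rat (w (vs j)) else 0)"
  define be where "be = (\<lambda>v. if v \<in> vs ` {1..j-1} then real_of_rat (w v - w (vs j)) else 0)"
  define T where "T = vs ` {1..j-1}"
  have injl: "inj_on vs {1..l}" using enum by (simp add: bij_betw_def)
  have Sim: "vs ` {1..l} = S" using enum by (simp add: bij_betw_def)
  have jl: "1 \<le> j" "j \<le> l" using j(1) by auto
  have injT: "inj_on vs {1..j-1}" using injl by (rule inj_on_subset) (use jl in auto)
  have TS: "T \<subseteq> S" unfolding T_def Sim[symmetric] using jl by auto
  have vjS: "vs j \<in> S" using Sim jl by auto
  have vjT: "vs j \<notin> T" unfolding T_def
  proof
    assume "vs j \<in> vs ` {1..j-1}"
    then obtain x where x: "x \<in> {1..j-1}" "vs j = vs x" by auto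
    then have "j = x" using inj_onD[OF injl x(2)] jl by auto
    then show False using x by auto
  qed
  have fS: "finite S" using finV SV finite_subset by blast
  have TV: "T \<subseteq> V" using TS SV by auto
  have wj0: "0 \<le> w (vs j)" using wnn vjS SV by auto
  have wle: "w v \<le> w (vs j)" if "v \<in> T" for v
    using that sorted jl unfolding T_def by auto
  have wge: "w (vs j) \<le> w v" if vS: "v \<in> S" and vT: "v \<notin> T" for v
  proof -
    obtain i where i: "i \<in> {1..l}" "v = vs i" using vS unfolding Sim[symmetric] by auto
    have "\<not> i \<le> j - 1" using vT i unfolding T_def by auto
    then show ?thesis using sorted i jl by auto
  qed
  have dfeas: "dual_feasible V w S al be"
    unfolding dual_feasible_def al_def be_def T_def[symmetric]
  proof (intro conjI ballI)
    fix v assume v: "v \<in> S"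
    show "(if k' < kxi C d \<xi> S then real_of_rat (w (vs j)) else 0) +
         (if v \<in> T then real_of_rat (w v - w (vs j)) else 0) \<le> real_of_rat (w v)"
      using wle[of v] wge[OF v] wj0 v SV wnn
      by (auto simp: of_rat_diff of_rat_less_eq)
  next
    fix v assume v: "v \<in> V - S"
    then show "(if v \<in> T then real_of_rat (w v - w (vs j)) else 0) \<le> real_of_rat (w v)"
      using TS wnn by (auto simp: of_rat_diff of_rat_less_eq)
  next
    show "0 \<le> (if k' < kxi C d \<xi> S then real_of_rat (w (vs j)) else 0)"
      using wj0 by (auto simp: of_rat_less_eq)
  next
    fix v assume v: "v \<in> V"
    show "(if v \<in> T then real_of_rat (w v - w (vs j)) else 0) \<le> 0"
      using wle[of v] by (auto simp: of_rat_diff of_rat_less_eq)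
  qed
  have key: "\<exists>y0. primal_feasible V r b S y0 \<and>
       (\<Sum>v\<in>V. real_of_rat (w v) * y0 v) \<le> dual_obj V r b al be \<and> al \<le> dual_obj V r b al be"
  proof (cases "k' < kxi C d \<xi> S")
    case False
    have v1: "vs 1 \<in> V" using Sim SV jl by auto
    have "r \<le> (\<Sum>i'\<in>{1..1}. b (vs i'))" using False bnn v1 unfolding r_def by auto
    then have "j \<le> 1" using jmin jl unfolding r_def by auto
    then have j1: "j = 1" using jl by auto
    then have "T = {}" unfolding T_def by auto
    then have be0: "be = (\<lambda>v. 0)" unfolding be_def T_def[symmetric] by auto
    have al0: "al = 0" using False unfolding al_def by auto
    have "primal_feasible V r b S (\<lambda>v. 0)" unfolding primal_feasible_def
      using False bnn unfolding r_def by auto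
    then show ?thesis by (intro exI[of _ "\<lambda>v. 0"]) (simp add: dual_obj_def be0 al0)
  next
    case True
    define P where "P = (\<Sum>i\<in>{1..j-1}. b (vs i))"
    have PT: "P = (\<Sum>v\<in>T. b v)" unfolding P_def T_def using sum.reindex[OF injT, of b] by (simp add: comp_def)
    have Pr: "P < r"
    proof (cases "j = 1")
      case True then show ?thesis using \<open>k' < kxi C d \<xi> S\<close> unfolding P_def r_def by simp
    next
      case False
      then have "j - 1 \<in> {1..l}" using jl by auto
      then have "kxi C d \<xi> S - k' \<le> (\<Sum>i'\<in>{1..j-1}. b (vs i')) \<longrightarrow> j \<le> j - 1"
        using jmin by blast
      then show ?thesis unfolding P_def r_def using False jl by linarith
    qed
    have rP: "r \<le> P + b (vs j)"
    proof -
      have "{1..j} = insert j {1..j-1}" using jl by auto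
      moreover have jn: "j \<notin> {1..j-1}" by auto
      ultimately have "(\<Sum>i\<in>{1..j}. b (vs i)) = b (vs j) + P" unfolding P_def
        using sum.insert[OF finite_atLeastAtMost jn, of "\<lambda>i. b (vs i)"] by simp
      then show ?thesis using j(2) unfolding r_def by simp
    qed
    define y0 where "y0 = (\<lambda>v. (if v \<in> T then real_of_int (b v) else 0)
           + (if v = vs j then real_of_int (r - P) else 0))"
    have s1: "(\<Sum>v\<in>S. y0 v) = real_of_int r"
    proof -
      have "(\<Sum>v\<in>S. y0 v) = (\<Sum>v\<in>S. (if v \<in> T then real_of_int (b v) else 0))
          + (\<Sum>v\<in>S. (if v = vs j then real_of_int (r - P) else 0))"
        unfolding y0_def by (rule sum.distrib)
      also have "(\<Sum>v\<in>S. (if v \<in> T then real_of_int (b v) else 0)) = (\<Sum>v\<in>S \<inter> T. real_of_int (b v))"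
        by (rule sum.inter_restrict[OF fS, symmetric])
      also have "S \<inter> T = T" using TS by auto
      also have "(\<Sum>v\<in>S. (if v = vs j then real_of_int (r - P) else 0)) = real_of_int (r - P)"
        using vjS fS by simp
      finally show ?thesis unfolding PT by simp
    qed
    have pf: "primal_feasible V r b S y0" unfolding primal_feasible_def
    proof (intro conjI ballI)
      show "real_of_int r \<le> sum y0 S" using s1 by simp
    next
      fix v assume v: "v \<in> V"
      show "y0 v \<le> real_of_int (b v)" using vjT rP unfolding y0_def using bnn v by auto
      show "0 \<le> y0 v" using Pr bnn v unfolding y0_def by auto
    qed
    have val: "(\<Sum>v\<in>V. real_of_rat (w v) * y0 v) = (\<Sum>v\<in>T. real_of_rat (w v) * real_of_int (b v))
         + real_of_rat (w (vs j)) * real_of_int (r - P)"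
    proof -
      have "(\<Sum>v\<in>V. real_of_rat (w v) * y0 v) = (\<Sum>v\<in>V. (if v \<in> T then real_of_rat (w v) * real_of_int (b v) else 0))
          + (\<Sum>v\<in>V. (if v = vs j then real_of_rat (w v) * real_of_int (r - P) else 0))"
        unfolding y0_def sum.distrib[symmetric] by (rule sum.cong) (auto simp: algebra_simps)
      also have "(\<Sum>v\<in>V. (if v \<in> T then real_of_rat (w v) * real_of_int (b v) else 0)) = (\<Sum>v\<in>V \<inter> T. real_of_rat (w v) * real_of_int (b v))"
        by (rule sum.inter_restrict[OF finV, symmetric])
      also have "V \<inter> T = T" using TV by auto
      also have "(\<Sum>v\<in>V. (if v = vs j then real_of_rat (w v) * real_of_int (r - P) else 0)) = real_of_rat (w (vs j)) * real_of_int (r - P)"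
        using vjS SV finV by auto
      finally show ?thesis .
    qed
    have obj: "dual_obj V r b al be = real_of_rat (w (vs j)) * real_of_int r
        + (\<Sum>v\<in>T. (real_of_rat (w v) - real_of_rat (w (vs j))) * real_of_int (b v))"
    proof -
      have "(\<Sum>v\<in>V. be v * real_of_int (b v)) = (\<Sum>v\<in>V. (if v \<in> T then (real_of_rat (w v) - real_of_rat (w (vs j))) * real_of_int (b v) else 0))"
        proof (rule sum.cong[OF refl])
        fix v assume "v \<in> V"
        show "be v * real_of_int (b v) = (if v \<in> T then (real_of_rat (w v) - real_of_rat (w (vs j))) * real_of_int (b v) else 0)"
          unfolding be_def T_def of_rat_diff by simp
      qed
      also have "\<dots> = (\<Sum>v\<in>V \<inter> T. (real_of_rat (w v) - real_of_rat (w (vs j))) * real_of_int (b v))"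
        by (rule sum.inter_restrict[OF finV, symmetric])
      also have "V \<inter> T = T" using TV by auto
      finally show ?thesis unfolding dual_obj_def al_def using True by simp
    qed
    have eq: "dual_obj V r b al be = (\<Sum>v\<in>V. real_of_rat (w v) * y0 v)"
    proof -
      have a: "(\<Sum>v\<in>T. (real_of_rat (w v) - real_of_rat (w (vs j))) * real_of_int (b v))
          = (\<Sum>v\<in>T. real_of_rat (w v) * real_of_int (b v)) - real_of_rat (w (vs j)) * (\<Sum>v\<in>T. real_of_int (b v))"
        by (simp add: left_diff_distrib sum_subtractf sum_distrib_left)
      have c: "real_of_int (r - P) = real_of_int r - (\<Sum>v\<in>T. real_of_int (b v))"
        unfolding PT by simp
      show ?thesis unfolding obj val a c by (simp add: right_diff_distrib)
    qed
    have "al \<le> real_of_rat (w (vs j)) * real_of_int (r - P)"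
    proof -
      have "1 \<le> real_of_int (r - P)" using Pr by simp
      moreover have "0 \<le> real_of_rat (w (vs j))" using wj0 by (simp add: of_rat_less_eq)
      ultimately have "real_of_rat (w (vs j)) * 1 \<le> real_of_rat (w (vs j)) * real_of_int (r - P)"
        by (rule mult_left_mono)
      then show ?thesis unfolding al_def using True by simp
    qed
    also have "\<dots> \<le> dual_obj V r b al be" unfolding eq val
      using TV wnn bnn by (auto intro!: sum_nonneg simp: of_rat_less_eq)
    finally show ?thesis using pf eq by auto
  qed
  then obtain y0 where y0: "primal_feasible V r b S y0"
     "(\<Sum>v\<in>V. real_of_rat (w v) * y0 v) \<le> dual_obj V r b al be" "al \<le> dual_obj V r b al be" by blast
  have opt: "dual_optimal V w r b S al be" unfolding dual_optimal_def
  proof (intro conjI allI impI dfeas)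
    fix a' b' assume f: "dual_feasible V w S a' b'"
    have "dual_obj V r b a' b' \<le> (\<Sum>v\<in>V. real_of_rat (w v) * y0 v)"
      by (rule weak[OF finV SV f y0(1)])
    then show "dual_obj V r b a' b' \<le> dual_obj V r b al be" using y0(2) by linarith
  qed
  have "al \<le> primal_value V w r b S" unfolding primal_value_def
  proof (rule cInf_greatest)
    show "{\<Sum>v\<in>V. real_of_rat (w v) * y v |y. primal_feasible V r b S y} \<noteq> {}"
      using y0(1) by blast
  next
    fix x assume "x \<in> {\<Sum>v\<in>V. real_of_rat (w v) * y v |y. primal_feasible V r b S y}"
    then obtain y where x: "x = (\<Sum>v\<in>V. real_of_rat (w v) * y v)" and py: "primal_feasible V r b S y"
      by blast
    have "dual_obj V r b al be \<le> x" unfolding x by (rule weak[OF finV SV dfeas py])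
    then show "al \<le> x" using y0(3) by linarith
  qed
  then show ?thesis using opt unfolding r_def al_def be_def by simp
qed
end
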